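(* Let $F : \mathbb{C}^n \to \mathbb{C}^n$ be entire, and suppose the Koopman operator $\mathcal{K}_F g = g\circ F$ is bounded on $H_G(\mathbb{C}^n)$ (with domain all of $H_G(\mathbb{C}^n)$). Then there exist a matrix $A \in \mathbb{C}^{n\times n}$ and a vector $b \in \mathbb{C}^n$ such that $F(z) = Az + b$ for all $z \in \mathbb{C}^n$.
   Context: $H_G(\mathbb{C}^n)$ denotes the RKHS of entire functions on $\mathbb{C}^n$ with reproducing kernel $K_G(z,w) = \exp\!\left(-\tfrac12 \sum_{j=1}^n (z_j - \overline{w_j})^2\right)$. This is the complexified native space of the Gaussian RBF kernel $\exp(-\|x-y\|^2/2)$. Equivalently, $H_G(\mathbb{C}^n) = \{ g(z)e^{-\sum_j z_j^2/2} : g\in F^2(\mathbb{C}^n)\}$, where $F^2(\mathbb{C}^n)$ is the Fock space with kernel $e^{\sum_j \overline{w_j}z_j}$. *)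

theory Defs
  imports "HOL-Analysis.Analysis"
begin

text \<open>Holomorphy of a function of several complex variables: complex Frechet differentiability
  at every point (derivative real-linear and complex-homogeneous).\<close>
definition entire_fun :: "(complex ^ 'n \<Rightarrow> complex) \<Rightarrow> bool" where
  "entire_fun f \<longleftrightarrow>
     (\<forall>z. \<exists>L. (f has_derivative L) (at z) \<and> (\<forall>c v. L (c *s v) = c * L v))"

definition entire_map :: "(complex ^ 'n \<Rightarrow> complex ^ 'n) \<Rightarrow> bool" where
  "entire_map F \<longleftrightarrow> (\<forall>k. entire_fun (\<lambda>z. F z $ k))"

definition KG :: "complex ^ 'n \<Rightarrow> complex ^ 'n \<Rightarrow> complex" where
  "KG z w = exp (- (\<Sum>j\<in>UNIV. (z $ j - cnj (w $ j))^2) / 2)"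

text \<open>Reproducing kernel Hilbert space H(K) of a positive definite kernel K (with K(x,y) = <K_y,K_x>),
  described as usual (Aronszajn): f belongs to H(K) with norm at most c iff
  |sum_i a_i f(x_i)|^2 <= c^2 sum_{i,j} conj(a_i) a_j K(x_j,x_i) for all finite families,
  i.e. iff c^2 K(x,y) - f(x) conj(f(y)) is a positive semidefinite kernel.\<close>
definition rkhs_bound :: "('a \<Rightarrow> 'a \<Rightarrow> complex) \<Rightarrow> ('a \<Rightarrow> complex) \<Rightarrow> real \<Rightarrow> bool" where
  "rkhs_bound K f c \<longleftrightarrow> 0 \<le> c \<and>
     (\<forall>(m::nat) (x::nat \<Rightarrow> 'a) (a::nat \<Rightarrow> complex).
        (cmod (\<Sum>i<m. a i * f (x i)))^2
          \<le> c^2 * Re (\<Sum>i<m. \<Sum>j<m. cnj (a i) * a j * K (x j) (x i)))"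

definition rkhs :: "('a \<Rightarrow> 'a \<Rightarrow> complex) \<Rightarrow> ('a \<Rightarrow> complex) set" where
  "rkhs K = {f. \<exists>c. rkhs_bound K f c}"

definition rkhs_norm :: "('a \<Rightarrow> 'a \<Rightarrow> complex) \<Rightarrow> ('a \<Rightarrow> complex) \<Rightarrow> real" where
  "rkhs_norm K f = Inf {c. rkhs_bound K f c}"

definition HG :: "(complex ^ 'n \<Rightarrow> complex) set" where
  "HG = rkhs KG"

definition koopman_bounded :: "(complex ^ 'n \<Rightarrow> complex ^ 'n) \<Rightarrow> bool" where
  "koopman_bounded F \<longleftrightarrow>
     (\<exists>C. \<forall>g\<in>HG. g \<circ> F \<in> HG \<and> rkhs_norm KG (g \<circ> F) \<le> C * rkhs_norm KG g)"

end

theory Submission imports Defs "HOL-Complex_Analysis.Complex_Analysis" begin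


no_notation fps_nth (infixl \<open>$\<close> 75)


definition ipc :: "complex ^ 'n \<Rightarrow> complex ^ 'n \<Rightarrow> complex" where
  "ipc z w = (\<Sum>k\<in>UNIV. z $ k * cnj (w $ k))"

lemma Q_pow_nonneg:
  fixes x :: "nat \<Rightarrow> complex ^ 'n"
  shows "0 \<le> Re (\<Sum>i<m. \<Sum>j<m. cnj (b i) * b j * ipc (x j) (x i) ^ N)"
proof (induction N arbitrary: b)
  case 0
  have "(\<Sum>i<m. \<Sum>j<m. cnj (b i) * b j * ipc (x j) (x i) ^ 0) = cnj (\<Sum>i<m. b i) * (\<Sum>j<m. b j)"
    by (simp add: sum_product)
  also have "\<dots> = (\<Sum>j<m. b j) * cnj (\<Sum>i<m. b i)"
    by (rule mult.commute)
  also have "\<dots> = of_real ((cmod (\<Sum>j<m. b j))^2)"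
    by (rule complex_norm_square[symmetric])
  finally show ?case by simp
next
  case (Suc N)
  have "(\<Sum>i<m. \<Sum>j<m. cnj (b i) * b j * ipc (x j) (x i) ^ Suc N)
      = (\<Sum>i<m. \<Sum>j<m. \<Sum>k\<in>UNIV. cnj (b i * x i $ k) * (b j * x j $ k) * ipc (x j) (x i) ^ N)"
    by (simp add: ipc_def sum_distrib_left sum_distrib_right mult_ac)
  also have "\<dots> = (\<Sum>i<m. \<Sum>k\<in>UNIV. \<Sum>j<m. cnj (b i * x i $ k) * (b j * x j $ k) * ipc (x j) (x i) ^ N)"
    by (rule sum.cong[OF refl], rule sum.swap)
  also have "\<dots> = (\<Sum>k\<in>UNIV. \<Sum>i<m. \<Sum>j<m. cnj (b i * x i $ k) * (b j * x j $ k) * ipc (x j) (x i) ^ N)"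
    by (rule sum.swap)
  finally have eq: "(\<Sum>i<m. \<Sum>j<m. cnj (b i) * b j * ipc (x j) (x i) ^ Suc N)
      = (\<Sum>k\<in>UNIV. \<Sum>i<m. \<Sum>j<m. cnj (b i * x i $ k) * (b j * x j $ k) * ipc (x j) (x i) ^ N)" .
  show ?case unfolding eq
    by (subst Re_sum, rule sum_nonneg, rule Suc.IH)
qed

lemma exp_ipc_psd:
  fixes x :: "nat \<Rightarrow> complex ^ 'n"
  shows "0 \<le> Re (\<Sum>i<m. \<Sum>j<m. cnj (b i) * b j * exp (ipc (x j) (x i)))"
proof -
  define T where "T i j N = cnj (b i) * b j * (ipc (x j) (x i) ^ N / of_real (fact N))" for i j N
  have se: "summable (\<lambda>N. z ^ N / of_real (fact N))" for z :: complex
    using summable_exp[of z] by (simp add: divide_inverse mult.commute)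
  have sT: "summable (T i j)" for i j
    unfolding T_def by (intro summable_mult se)
  have ee: "exp z = (\<Sum>N. z ^ N / of_real (fact N))" for z :: complex
    by (simp add: exp_def scaleR_conv_of_real field_simps)
  have ce: "c * exp z = (\<Sum>N. c * (z ^ N / of_real (fact N)))" for c z :: complex
    unfolding ee by (rule suminf_mult[OF se, symmetric])
  have "(\<Sum>i<m. \<Sum>j<m. cnj (b i) * b j * exp (ipc (x j) (x i)))
     = (\<Sum>i<m. \<Sum>j<m. (\<Sum>N. T i j N))"
    unfolding T_def ce ..
  also have "\<dots> = (\<Sum>N. \<Sum>i<m. \<Sum>j<m. T i j N)"
    by (simp add: suminf_sum sT summable_sum)
  finally have eq: "(\<Sum>i<m. \<Sum>j<m. cnj (b i) * b j * exp (ipc (x j) (x i))) = (\<Sum>N. \<Sum>i<m. \<Sum>j<m. T i j N)" .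
  have s2: "summable (\<lambda>N. \<Sum>i<m. \<Sum>j<m. T i j N)" by (intro summable_sum sT)
  have "Re (\<Sum>N. \<Sum>i<m. \<Sum>j<m. T i j N) = (\<Sum>N. Re (\<Sum>i<m. \<Sum>j<m. T i j N))"
    using s2 by (simp add: Re_suminf)
  also have "\<dots> \<ge> 0"
  proof (rule suminf_nonneg)
    show "summable (\<lambda>N. Re (\<Sum>i<m. \<Sum>j<m. T i j N))" using s2 by (rule summable_Re)
    fix N
    have "(\<Sum>i<m. \<Sum>j<m. T i j N) = (\<Sum>i<m. \<Sum>j<m. cnj (b i) * b j * ipc (x j) (x i) ^ N) / of_real (fact N)"
      by (simp add: T_def sum_divide_distrib)
    moreover have "Re (z / fact N) = Re z / fact N" for z :: complex
      by (metis Re_divide_of_real of_real_fact)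
    ultimately show "0 \<le> Re (\<Sum>i<m. \<Sum>j<m. T i j N)"
      using Q_pow_nonneg[where m=m and b=b and x=x and N=N] by (simp del: Re_sum)
  qed
  finally show ?thesis using eq by simp
qed


lemma norm_lt_refl2M:
  fixes z :: complex assumes "Re z < M" "0 < M"
  shows "norm z < norm (2 * of_real M - z)"
proof -
  have "(norm z)^2 < (norm (2 * of_real M - z))^2"
    using assms unfolding cmod_power2 by (simp add: power2_eq_square algebra_simps)
  then show ?thesis by (meson norm_ge_zero power_less_imp_less_base)
qed

lemma BC_bound:
  fixes g :: "complex \<Rightarrow> complex"
  assumes hol: "g holomorphic_on UNIV" and g0: "g 0 = 0"
    and re: "\<And>t. Re (g t) \<le> A + B * norm t" and A: "0 \<le> A" and B: "0 \<le> B"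
  shows "norm (g t) \<le> 2 * (A + 1) + 4 * B * norm t"
proof (cases "t = 0")
  case True then show ?thesis using g0 A B by simp
next
  case False
  define R where "R = 2 * norm t"
  define M where "M = A + B * R + 1"
  have R: "R > 0" using False R_def by simp
  have M: "M > 0" using A B R M_def by (simp add: add_nonneg_pos)
  have reM: "Re (g (of_real R * s)) < M" if "norm s < 1" for s
  proof -
    have "norm (of_real R * s) \<le> R" using that R by (simp add: norm_mult)
    then have "B * norm (of_real R * s) \<le> B * R" using B by (simp add: mult_left_mono)
    then show ?thesis using re[of "of_real R * s"] M_def by linarith
  qed
  define w where "w s = g (of_real R * s) / (2 * of_real M - g (of_real R * s))" for s
  have nz: "2 * of_real M - g (of_real R * s) \<noteq> 0" if "norm s < 1" for s
  proof
    assume "2 * of_real M - g (of_real R * s) = 0"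
    then have "g (of_real R * s) = 2 * of_real M" by simp
    then have "Re (g (of_real R * s)) = 2 * M" by simp
    with reM[OF that] M show False by simp
  qed
  have holw: "w holomorphic_on ball 0 1"
    unfolding w_def
    by (intro holomorphic_intros holomorphic_on_compose_gen[OF _ holomorphic_on_subset[OF hol], unfolded o_def] ) (auto, metis nz eq_iff_diff_eq_0)
  have w0: "w 0 = 0" using g0 by (simp add: w_def)
  have wlt: "norm (w s) < 1" if "norm s < 1" for s
  proof -
    have "norm (g (of_real R * s)) < norm (2 * of_real M - g (of_real R * s))"
      using norm_lt_refl2M[OF reM[OF that] M] .
    then show ?thesis using nz[OF that] by (simp add: w_def norm_divide divide_less_eq)
  qed
  define xi where "xi = t / of_real R"
  have nxi: "norm xi = 1/2" using False by (simp add: xi_def R_def norm_divide)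
  have "norm (w xi) \<le> norm xi"
    using Schwarz_Lemma(1)[OF holw w0 wlt, of xi] nxi by simp
  moreover have "of_real R * xi = t" using R by (simp add: xi_def)
  ultimately have "norm (g t / (2 * of_real M - g t)) \<le> 1/2" using nxi by (simp add: w_def)
  moreover have "2 * of_real M - g t \<noteq> 0" using nz[of xi] nxi \<open>of_real R * xi = t\<close> by simp
  ultimately have "norm (g t) \<le> 1/2 * norm (2 * of_real M - g t)"
    by (simp add: norm_divide divide_le_eq)
  also have "\<dots> \<le> 1/2 * (2 * M + norm (g t))"
    using norm_triangle_ineq4[of "2 * of_real M" "g t"] M by (simp add: norm_mult)
  finally have "norm (g t) \<le> 2 * M" by simp
  then show ?thesis using M_def R_def by simp
qed

lemma affine_of_Im_bound:
  fixes f :: "complex \<Rightarrow> complex"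
  assumes hol: "f holomorphic_on UNIV"
    and im: "\<And>t. \<bar>Im (f t)\<bar> \<le> A + B * norm t" and B: "0 \<le> B"
  shows "\<exists>\<beta>. \<forall>t. f t = f 0 + \<beta> * t"
proof -
  have A: "0 \<le> A" using im[of 0] by (metis abs_ge_zero mult_zero_right norm_zero add_0_right order_trans)
  define g where "g t = - \<i> * (f t - f 0)" for t
  have holg: "g holomorphic_on UNIV" unfolding g_def by (intro holomorphic_intros hol)
  have g0: "g 0 = 0" by (simp add: g_def)
  have re: "Re (g t) \<le> (2*A) + B * norm t" for t
  proof -
    have "Re (g t) = Im (f t) - Im (f 0)" by (simp add: g_def)
    then show ?thesis using im[of t] im[of 0] by (simp add: abs_le_iff)
  qed
  have bd: "norm (g t) \<le> 2 * (2*A + 1) + 4 * B * norm t" for t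
    using BC_bound[OF holg g0 re] A B by simp
  have "norm (g z) \<le> (2 * (2*A + 1) + 4 * B) * norm z ^ 1" if "1 \<le> norm z" for z
  proof -
    have "2 * (2*A + 1) \<le> 2 * (2*A + 1) * norm z" using that A by (simp add: mult_le_cancel_left1)
    then show ?thesis using bd[of z] by (simp add: algebra_simps)
  qed
  then have "g z = (\<Sum>k\<le>1. (deriv^^k) g 0 / fact k * z ^ k)" for z
    by (rule Liouville_polynomial[OF holg])
  then have gz: "g z = deriv g 0 * z" for z using g0 by simp
  show ?thesis
  proof (intro exI allI)
    fix t
    have "f t = f 0 + \<i> * g t" by (simp add: g_def algebra_simps)
    then show "f t = f 0 + (\<i> * deriv g 0) * t" using gz[of t] by simp
  qed
qed


definition phiG :: "complex ^ 'n \<Rightarrow> complex" where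
  "phiG z = exp (- (\<Sum>k\<in>UNIV. (z $ k)^2) / 2)"

lemma KG_fact: "KG z w = phiG z * cnj (phiG w) * exp (ipc z w)"
proof -
  have c: "cnj (phiG w) = exp (- (\<Sum>k\<in>UNIV. (cnj (w $ k))^2) / 2)"
    by (simp add: phiG_def exp_cnj)
  have e: "- (\<Sum>j\<in>UNIV. (z $ j - cnj (w $ j))^2) / 2
     = - (\<Sum>k\<in>UNIV. (z $ k)^2) / 2 + - (\<Sum>k\<in>UNIV. (cnj (w $ k))^2) / 2 + ipc z w"
    by (simp add: ipc_def power2_diff sum.distrib sum_subtractf sum_distrib_left field_simps)
  show ?thesis unfolding KG_def c e by (simp add: phiG_def mult_exp_exp algebra_simps)
qed

lemma KG_herm: "cnj (KG z w) = KG w z"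
proof -
  have "(cnj (z $ j) - w $ j)^2 = (w $ j - cnj (z $ j))^2" for j
    by (simp add: power2_commute)
  then show ?thesis by (simp add: KG_def exp_cnj)
qed

lemma KG_psd:
  fixes x :: "nat \<Rightarrow> complex ^ 'n"
  shows "0 \<le> Re (\<Sum>i<m. \<Sum>j<m. cnj (a i) * a j * KG (x j) (x i))"
proof -
  have "(\<Sum>i<m. \<Sum>j<m. cnj (a i) * a j * KG (x j) (x i))
     = (\<Sum>i<m. \<Sum>j<m. cnj (a i * phiG (x i)) * (a j * phiG (x j)) * exp (ipc (x j) (x i)))"
    by (simp add: KG_fact mult_ac)
  then show ?thesis using exp_ipc_psd[where m=m and x=x and b="\<lambda>i. a i * phiG (x i)"] by simp
qed

lemma KG_real_self: assumes "\<forall>k. cnj (r $ k) = r $ k" shows "KG r r = 1"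
  using assms by (simp add: KG_def)

lemma KG_real_bound:
  fixes r :: "complex ^ 'n"
  assumes rr: "\<forall>k. cnj (r $ k) = r $ k"
  shows "rkhs_bound KG (\<lambda>z. KG z r) 1"
  unfolding rkhs_bound_def
proof (intro conjI allI)
  fix m :: nat and x :: "nat \<Rightarrow> complex ^ 'n" and a :: "nat \<Rightarrow> complex"
  define S where "S = (\<Sum>i<m. a i * KG (x i) r)"
  define x' where "x' = x(m := r)"
  define a' where "a' = a(m := - S)"
  have P: "0 \<le> Re (\<Sum>i<Suc m. \<Sum>j<Suc m. cnj (a' i) * a' j * KG (x' j) (x' i))"
    by (rule KG_psd)
  define Q where "Q = (\<Sum>i<m. \<Sum>j<m. cnj (a i) * a j * KG (x j) (x i))"
  have h1: "(\<Sum>i<m. cnj (a i) * (- S) * KG r (x i)) = - S * cnj S"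
  proof -
    have kh: "KG r (x i) = cnj (KG (x i) r)" for i by (simp add: KG_herm)
    have "(\<Sum>i<m. cnj (a i) * (- S) * KG r (x i)) = - S * (\<Sum>i<m. cnj (a i * KG (x i) r))"
      unfolding kh by (simp add: sum_distrib_left mult_ac)
    then show ?thesis by (simp add: S_def)
  qed
  have h2: "(\<Sum>j<m. cnj (- S) * a j * KG (x j) r) = - cnj S * S"
  proof -
    have "(\<Sum>j<m. cnj (- S) * a j * KG (x j) r) = - cnj S * (\<Sum>j<m. a j * KG (x j) r)"
      by (simp add: sum_distrib_left mult_ac)
    then show ?thesis by (simp add: S_def)
  qed
  have "(\<Sum>i<Suc m. \<Sum>j<Suc m. cnj (a' i) * a' j * KG (x' j) (x' i))
      = Q + (\<Sum>i<m. cnj (a i) * (- S) * KG r (x i)) + (\<Sum>j<m. cnj (- S) * a j * KG (x j) r)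
        + cnj (- S) * (- S) * KG r r"
    by (simp add: a'_def x'_def Q_def sum.distrib sum_subtractf sum_negf)
  also have "\<dots> = Q - of_real ((cmod S)^2)"
    using KG_real_self[OF rr] h1 h2 complex_norm_square[of S] by (simp add: mult_ac)
  finally have "0 \<le> Re Q - (cmod S)^2" using P by simp
  then show "(cmod (\<Sum>i<m. a i * KG (x i) r))^2 \<le> 1^2 * Re Q"
    by (simp add: S_def)
qed simp


lemma scal_linear: "linear (\<lambda>t::complex. t *s (z :: complex ^ 'n))"
  by (rule linearI) (simp_all add: vec_eq_iff algebra_simps)

lemma line_deriv:
  fixes h :: "complex ^ 'n \<Rightarrow> complex"
  assumes d: "(h has_derivative L) (at (t0 *s z))" and hom: "\<forall>c v. L (c *s v) = c * L v"
  shows "((\<lambda>t. h (t *s z)) has_field_derivative L z) (at t0)"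
proof -
  have l: "((\<lambda>t. t *s z) has_derivative (\<lambda>t. t *s z)) (at t0)"
    by (rule linear_imp_has_derivative[OF scal_linear])
  have "((\<lambda>t. h (t *s z)) has_derivative (\<lambda>t. L (t *s z))) (at t0)"
    using has_derivative_compose[OF l d] by simp
  moreover have "(\<lambda>t. L (t *s z)) = (*) (L z)" using hom by (auto simp: fun_eq_iff mult.commute)
  ultimately show ?thesis by (simp add: has_field_derivative_def)
qed

lemma norm_smult_vec: "norm (t *s (z :: complex ^ 'n)) = cmod t * norm z"
  by (simp add: norm_vec_def norm_mult L2_set_right_distrib)

lemma norm_vec_sq: "(norm (y :: complex ^ 'n))^2 = (\<Sum>k\<in>UNIV. (cmod (y $ k))^2)"
  by (simp add: norm_vec_def L2_set_def sum_nonneg)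

lemma KG_center: "cmod (KG u (\<chi> k. of_real (Re (u $ k)))) = exp ((\<Sum>k\<in>UNIV. (Im (u $ k))^2) / 2)"
proof -
  have "(u $ k - cnj (of_real (Re (u $ k))))^2 = - of_real ((Im (u $ k))^2)" for k
  proof -
    have "u $ k - cnj (of_real (Re (u $ k))) = \<i> * of_real (Im (u $ k))" by (simp add: complex_eq_iff)
    then show ?thesis by (simp add: power_mult_distrib)
  qed
  then have "KG u (\<chi> k. of_real (Re (u $ k))) = exp (of_real ((\<Sum>k\<in>UNIV. (Im (u $ k))^2) / 2))"
    by (simp add: KG_def sum_negf)
  then show ?thesis by (simp only: norm_exp_eq_Re) simp
qed

lemma KG_diag: "KG y y = of_real (exp (2 * (\<Sum>k\<in>UNIV. (Im (y $ k))^2)))"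
proof -
  have sq: "(y $ k - cnj (y $ k))^2 = of_real (- 4 * (Im (y $ k))^2)" for k
  proof -
    have "y $ k - cnj (y $ k) = 2 * \<i> * of_real (Im (y $ k))" by (simp add: complex_eq_iff)
    then show ?thesis by (simp add: power_mult_distrib)
  qed
  have "- (\<Sum>k\<in>UNIV. (y $ k - cnj (y $ k))^2) / 2 = - (\<Sum>k\<in>UNIV. of_real (- 4 * (Im (y $ k))^2)) / 2"
    by (simp only: sq)
  also have "\<dots> = - of_real (\<Sum>k\<in>UNIV. - 4 * (Im (y $ k))^2) / 2"
    by (simp only: of_real_sum)
  also have "\<dots> = of_real (- (\<Sum>k\<in>UNIV. - 4 * (Im (y $ k))^2) / 2)"
    by simp
  also have "- (\<Sum>k\<in>UNIV. - 4 * (Im (y $ k))^2) / 2 = 2 * (\<Sum>k\<in>UNIV. (Im (y $ k))^2)"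
    by (simp add: sum_negf flip: sum_distrib_left)
  finally show ?thesis by (simp only: KG_def exp_of_real)
qed

lemma sq_to_abs:
  fixes u E n :: real assumes "u^2 \<le> E + 2 * n^2" "0 \<le> E" "0 \<le> n"
  shows "\<bar>u\<bar> \<le> E + 1 + 2 * n"
proof -
  have "(E + 1 + 2 * n)^2 = (E + 1) * (E + 1) + 4 * n * (E + 1) + 4 * n^2"
    by (simp add: power2_eq_square algebra_simps)
  moreover have "E + 1 \<le> (E + 1) * (E + 1)" using assms by (simp add: mult_le_cancel_left1)
  moreover have "0 \<le> 4 * n * (E + 1)" using assms by simp
  moreover have "0 \<le> n^2" by simp
  ultimately have "u^2 \<le> (E + 1 + 2 * n)^2" using assms by linarith
  then have "\<bar>u\<bar>^2 \<le> (E + 1 + 2 * n)^2" by simp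
  then show ?thesis by (rule power2_le_imp_le) (use assms in simp)
qed

lemma Im_bound:
  fixes F :: "complex ^ 'n \<Rightarrow> complex ^ 'n"
  assumes kb: "koopman_bounded F"
  shows "\<exists>E\<ge>0. \<forall>y k. \<bar>Im (F y $ k)\<bar> \<le> E + 2 * norm y"
proof -
  obtain C where HC: "\<And>g. g \<in> HG \<Longrightarrow> g \<circ> F \<in> HG \<and> rkhs_norm KG (g \<circ> F) \<le> C * rkhs_norm KG g"
    using kb unfolding koopman_bounded_def by blast
  define D where "D = \<bar>C\<bar> + 1"
  have D1: "1 \<le> D" by (simp add: D_def)
  have main: "(\<Sum>k\<in>UNIV. (Im (F y $ k))^2) \<le> 2 * ln D + 2 * (norm y)^2" for y
  proof -
    define r :: "complex ^ 'n" where "r = (\<chi> k. of_real (Re (F y $ k)))"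
    have rr: "\<forall>k. cnj (r $ k) = r $ k" by (simp add: r_def)
    define g where "g = (\<lambda>z. KG z r)"
    have gb: "rkhs_bound KG g 1" unfolding g_def by (rule KG_real_bound[OF rr])
    have bdd: "bdd_below {c. rkhs_bound KG f c}" for f :: "complex ^ 'n \<Rightarrow> complex"
      by (rule bdd_belowI[of _ 0]) (simp add: rkhs_bound_def)
    have gHG: "g \<in> HG" using gb unfolding HG_def rkhs_def by blast
    have ng1: "rkhs_norm KG g \<le> 1" unfolding rkhs_norm_def
      by (rule cInf_lower) (use gb bdd in auto)
    have ng0: "0 \<le> rkhs_norm KG g" unfolding rkhs_norm_def
    proof (rule cInf_greatest)
      show "{c. rkhs_bound KG g c} \<noteq> {}" using gb by blast
    qed (simp add: rkhs_bound_def)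
    from HC[OF gHG] have gF: "g \<circ> F \<in> HG" and nb: "rkhs_norm KG (g \<circ> F) \<le> C * rkhs_norm KG g"
      by auto
    have ne: "{c. rkhs_bound KG (g \<circ> F) c} \<noteq> {}" using gF by (auto simp: HG_def rkhs_def)
    obtain c where cb: "rkhs_bound KG (g \<circ> F) c" and clt: "c < rkhs_norm KG (g \<circ> F) + 1"
      using cInf_lessD[OF ne, of "rkhs_norm KG (g \<circ> F) + 1"] unfolding rkhs_norm_def by auto
    have "C * rkhs_norm KG g \<le> \<bar>C\<bar>"
    proof -
      have "C * rkhs_norm KG g \<le> \<bar>C\<bar> * rkhs_norm KG g" using ng0 by (simp add: mult_right_mono)
      also have "\<dots> \<le> \<bar>C\<bar>" using ng1 ng0 by (simp add: mult_left_le)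
      finally show ?thesis .
    qed
    with clt nb have cD: "c \<le> D" by (simp add: D_def)
    have c0: "0 \<le> c" using cb by (simp add: rkhs_bound_def)
    have "(cmod ((g \<circ> F) y))^2 \<le> c^2 * Re (KG y y)"
      using cb unfolding rkhs_bound_def
      by (elim conjE allE[of _ 1] allE[of _ "\<lambda>_. y"] allE[of _ "\<lambda>_. 1"]) simp
    also have "\<dots> \<le> D^2 * Re (KG y y)"
      using c0 cD by (intro mult_right_mono power_mono) (auto simp: KG_diag)
    finally have ineq: "exp (\<Sum>k\<in>UNIV. (Im (F y $ k))^2) \<le> D^2 * exp (2 * (\<Sum>k\<in>UNIV. (Im (y $ k))^2))"
      by (simp add: g_def r_def KG_center KG_diag flip: exp_of_nat_mult)
    have "(\<Sum>k\<in>UNIV. (Im (F y $ k))^2) \<le> ln (D^2 * exp (2 * (\<Sum>k\<in>UNIV. (Im (y $ k))^2)))"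
      using ineq D1 by (subst ln_ge_iff) auto
    also have "\<dots> = 2 * ln D + 2 * (\<Sum>k\<in>UNIV. (Im (y $ k))^2)"
      using D1 by (simp add: ln_mult ln_realpow)
    also have "(\<Sum>k\<in>UNIV. (Im (y $ k))^2) \<le> (\<Sum>k\<in>UNIV. (cmod (y $ k))^2)"
      by (intro sum_mono) (metis abs_Im_le_cmod abs_le_square_iff abs_norm_cancel)
    finally show ?thesis unfolding norm_vec_sq by simp
  qed
  show ?thesis
  proof (intro exI[of _ "2 * ln D + 1"] conjI allI)
    show "0 \<le> 2 * ln D + 1" using D1 by simp
    fix y k
    have "(Im (F y $ k))^2 \<le> (\<Sum>k\<in>UNIV. (Im (F y $ k))^2)"
      by (rule member_le_sum) auto
    then have "(Im (F y $ k))^2 \<le> 2 * ln D + 2 * (norm y)^2" using main[of y] by simp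
    from sq_to_abs[OF this] D1 show "\<bar>Im (F y $ k)\<bar> \<le> 2 * ln D + 1 + 2 * norm y" by simp
  qed
qed


theorem theorem1:
  fixes F :: "complex ^ 'n \<Rightarrow> complex ^ 'n"
  assumes "entire_map F"
    and "koopman_bounded F"
  shows "\<exists>(A :: complex ^ 'n ^ 'n) (b :: complex ^ 'n). \<forall>z. F z = A *v z + b"
proof -
  have ent: "\<And>k z. \<exists>L. ((\<lambda>z. F z $ k) has_derivative L) (at z) \<and> (\<forall>c v. L (c *s v) = c * L v)"
    using assms(1) unfolding entire_map_def entire_fun_def by blast
  obtain L where L: "\<And>k. ((\<lambda>z. F z $ k) has_derivative L k) (at 0)"
    and Lh: "\<And>k. \<forall>c v. L k (c *s v) = c * L k v"
    using ent[of _ 0] by metis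
  obtain E where E0: "0 \<le> E" and EB: "\<And>y k. \<bar>Im (F y $ k)\<bar> \<le> E + 2 * norm y"
    using Im_bound[OF assms(2)] by blast
  have key: "F z $ k = F 0 $ k + L k z" for z k
  proof -
    define f where "f t = F (t *s z) $ k" for t
    have hol: "f holomorphic_on UNIV"
      unfolding holomorphic_on_def field_differentiable_def
    proof
      fix t0 :: complex
      obtain L' where "((\<lambda>z. F z $ k) has_derivative L') (at (t0 *s z))" "\<forall>c v. L' (c *s v) = c * L' v"
        using ent by blast
      from line_deriv[OF this] show "\<exists>f'. (f has_field_derivative f') (at t0 within UNIV)"
        unfolding f_def by blast
    qed
    have im: "\<bar>Im (f t)\<bar> \<le> E + (2 * norm z) * norm t" for t
      using EB[of "t *s z" k] by (simp add: f_def norm_smult_vec mult_ac)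
    obtain \<beta> where \<beta>: "\<And>t. f t = f 0 + \<beta> * t"
      using affine_of_Im_bound[OF hol im] by auto
    have f0: "f 0 = F 0 $ k" by (simp add: f_def)
    have f1: "f 1 = F z $ k" by (simp add: f_def)
    have \<beta>eq: "\<beta> = F z $ k - F 0 $ k" using \<beta>[of 1] f0 f1 by simp
    have d1: "(f has_field_derivative L k z) (at 0)"
      unfolding f_def by (rule line_deriv) (use L Lh in simp_all)
    have feq: "f = (\<lambda>t. F 0 $ k + t * (F z $ k - F 0 $ k))"
      using \<beta> f0 \<beta>eq by (auto simp: fun_eq_iff mult.commute)
    have d2: "(f has_field_derivative (F z $ k - F 0 $ k)) (at 0)"
      unfolding feq by (auto intro!: derivative_eq_intros)
    have "L k z = F z $ k - F 0 $ k" using DERIV_unique[OF d1 d2] .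
    then show ?thesis by simp
  qed
  have lin: "linear (L k)" for k
    by (rule bounded_linear.linear[OF has_derivative_bounded_linear[OF L]])
  define A :: "complex ^ 'n ^ 'n" where "A = (\<chi> k j. L k (axis j 1))"
  show ?thesis
  proof (intro exI allI)
    fix z :: "complex ^ 'n"
    have comp: "(A *v z) $ k = L k z" for k
    proof -
      have "(A *v z) $ k = (\<Sum>j\<in>UNIV. L k (axis j 1) * z $ j)"
        by (simp add: A_def matrix_vector_mult_def)
      also have "\<dots> = (\<Sum>j\<in>UNIV. L k ((z $ j) *s axis j 1))"
        using Lh[of k] by (simp add: mult.commute)
      also have "\<dots> = L k (\<Sum>j\<in>UNIV. (z $ j) *s axis j 1)"
        by (simp add: linear_sum[OF lin])
      also have "\<dots> = L k z" by (simp add: basis_expansion)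
      finally show ?thesis .
    qed
    show "F z = A *v z + F 0"
    proof (rule vec_eq_iff[THEN iffD2], rule allI)
      fix k
      show "F z $ k = (A *v z + F 0) $ k" using key[of z k] comp[of k] by simp
    qed
  qed
qed

end
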